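(* Let $G = K_2 \otimes K_n$. If $n = 2$, then $G$ is disconnected. If $n \geq 3$, then $\dim(G) = n-1$.
   Context: $K_r$ is the complete graph on $r$ vertices. The tensor product $G\otimes H$ has vertex set $V(G)\times V(H)$, with $(u,v)$ adjacent to $(x,y)$ iff $ux\in E(G)$ and $vy\in E(H)$. For a connected graph and an ordered set $W=\{w_1,\dots,w_k\}$ of vertices, $r(v\mid W)=(d(v,w_1),\dots,d(v,w_k))$; $W$ is resolving if distinct vertices have distinct representations; $\dim(G)$ is the minimum size of a resolving set. *)

theory Defs
  imports Main
begin

type_synonym 'a graph = "'a set \<times> ('a \<Rightarrow> 'a \<Rightarrow> bool)"

definition verts :: "'a graph \<Rightarrow> 'a set" where "verts G = fst G"
definition adj :: "'a graph \<Rightarrow> 'a \<Rightarrow> 'a \<Rightarrow> bool" where "adj G = snd G"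

definition complete_graph :: "nat \<Rightarrow> nat graph" where
  "complete_graph r = ({..<r}, \<lambda>i j. i \<noteq> j)"

definition tensor_product :: "'a graph \<Rightarrow> 'b graph \<Rightarrow> ('a \<times> 'b) graph" where
  "tensor_product G H = (verts G \<times> verts H,
     \<lambda>(u, v) (x, y). adj G u x \<and> adj H v y)"

definition is_walk :: "'a graph \<Rightarrow> 'a list \<Rightarrow> bool" where
  "is_walk G xs \<longleftrightarrow> xs \<noteq> [] \<and> set xs \<subseteq> verts G \<and>
     (\<forall>i. Suc i < length xs \<longrightarrow> adj G (xs ! i) (xs ! Suc i))"

definition connected_graph :: "'a graph \<Rightarrow> bool" where
  "connected_graph G \<longleftrightarrow> verts G \<noteq> {} \<and>
     (\<forall>u\<in>verts G. \<forall>v\<in>verts G. \<exists>xs. is_walk G xs \<and> hd xs = u \<and> last xs = v)"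

definition gdist :: "'a graph \<Rightarrow> 'a \<Rightarrow> 'a \<Rightarrow> nat" where
  "gdist G u v = (LEAST k. \<exists>xs. is_walk G xs \<and> hd xs = u \<and> last xs = v \<and> length xs = Suc k)"

text \<open>W resolves G: distinct vertices have distinct distance vectors to W.
  (For an ordered set W = {w1,...,wk}, r(v|W) = r(u|W) iff d(v,w) = d(u,w) for all w in W.)\<close>
definition resolving_set :: "'a graph \<Rightarrow> 'a set \<Rightarrow> bool" where
  "resolving_set G W \<longleftrightarrow> W \<subseteq> verts G \<and>
     (\<forall>u\<in>verts G. \<forall>v\<in>verts G. (\<forall>w\<in>W. gdist G u w = gdist G v w) \<longrightarrow> u = v)"

definition metric_dim :: "'a graph \<Rightarrow> nat" where
  "metric_dim G = (LEAST k. \<exists>W. finite W \<and> card W = k \<and> resolving_set G W)"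

end

theory Submission
  imports Defs
begin

lemma gdist_eqI:
  assumes "is_walk G xs" "hd xs = u" "last xs = v" "length xs = Suc d"
    and "\<And>k ys. k < d \<Longrightarrow> is_walk G ys \<Longrightarrow> hd ys = u \<Longrightarrow> last ys = v \<Longrightarrow> length ys = Suc k \<Longrightarrow> False"
  shows "gdist G u v = d"
  unfolding gdist_def
proof (rule Least_equality)
  show "\<exists>xs. is_walk G xs \<and> hd xs = u \<and> last xs = v \<and> length xs = Suc d" using assms by blast
next
  fix y assume "\<exists>xs. is_walk G xs \<and> hd xs = u \<and> last xs = v \<and> length xs = Suc y"
  then obtain ys where "is_walk G ys" "hd ys = u" "last ys = v" "length ys = Suc y" by blast
  then show "d \<le> y" using assms(5)[of y ys] by (meson not_le)
qed

lemma walk1: "is_walk G xs \<Longrightarrow> length xs = Suc 0 \<Longrightarrow> hd xs = last xs"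
  by (cases xs) auto

lemma walk2: assumes "is_walk G xs" "length xs = Suc (Suc 0)"
  shows "adj G (hd xs) (last xs)"
proof -
  obtain x y where xs: "xs = [x,y]" using assms(2)
    by (metis Suc_length_conv length_0_conv)
  have "adj G x y" using assms(1) unfolding xs is_walk_def
    by (metis length_Cons list.size(3) nth_Cons_0 nth_Cons_Suc zero_less_Suc Suc_less_eq)
  then show ?thesis unfolding xs by simp
qed

lemma walk3: assumes "is_walk G xs" "length xs = Suc (Suc (Suc 0))"
  shows "\<exists>y\<in>verts G. adj G (hd xs) y \<and> adj G y (last xs)"
proof -
  obtain x y z where xs: "xs = [x,y,z]" using assms(2)
    by (metis Suc_length_conv length_0_conv)
  have "adj G x y" using assms(1) unfolding xs is_walk_def
    by (metis length_Cons list.size(3) nth_Cons_0 nth_Cons_Suc zero_less_Suc Suc_less_eq)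
  moreover have "adj G y z" using assms(1) unfolding xs is_walk_def
    by (metis length_Cons list.size(3) nth_Cons_0 nth_Cons_Suc lessI Suc_less_eq One_nat_def)
  moreover have "y \<in> verts G" using assms(1) unfolding xs is_walk_def by auto
  ultimately show ?thesis unfolding xs by auto
qed

abbreviation C :: "nat \<Rightarrow> (nat \<times> nat) graph" where
  "C n \<equiv> tensor_product (complete_graph 2) (complete_graph n)"

lemma verts_C: "verts (C n) = {..<2} \<times> {..<n}"
  by (simp add: tensor_product_def complete_graph_def verts_def)

lemma adj_C: "adj (C n) (a,i) (b,j) = (a \<noteq> b \<and> i \<noteq> j)"
  by (simp add: tensor_product_def complete_graph_def adj_def)

lemma walk_simp2: "is_walk G [x,y] \<longleftrightarrow> x \<in> verts G \<and> y \<in> verts G \<and> adj G x y"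
  unfolding is_walk_def by (auto simp: less_Suc_eq)

lemma walk_simp3: "is_walk G [x,y,z] \<longleftrightarrow> x \<in> verts G \<and> y \<in> verts G \<and> z \<in> verts G \<and> adj G x y \<and> adj G y z"
  unfolding is_walk_def by (auto simp: less_Suc_eq)

lemma walk_simp4: "is_walk G [x,y,z,w] \<longleftrightarrow> x \<in> verts G \<and> y \<in> verts G \<and> z \<in> verts G \<and> w \<in> verts G \<and> adj G x y \<and> adj G y z \<and> adj G z w"
  unfolding is_walk_def by (auto simp: less_Suc_eq)

lemma avoid2: "3 \<le> (n::nat) \<Longrightarrow> \<exists>k<n. k \<noteq> i \<and> k \<noteq> j"
proof -
  assume "3 \<le> n"
  then have "0 < n" "1 < n" "2 < n" by auto
  then show ?thesis
  proof (cases "i \<noteq> 0 \<and> j \<noteq> 0")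
    case True then show ?thesis using \<open>0 < n\<close> by blast
  next
    case False
    show ?thesis
    proof (cases "i \<noteq> 1 \<and> j \<noteq> 1")
      case True then show ?thesis using \<open>1 < n\<close> by blast
    next
      case False2: False
      have "i \<noteq> 2 \<and> j \<noteq> 2" using False False2 by auto
      then show ?thesis using \<open>2 < n\<close> by blast
    qed
  qed
qed

definition D :: "nat \<times> nat \<Rightarrow> nat \<times> nat \<Rightarrow> nat" where
  "D u v = (if fst u = fst v then (if snd u = snd v then 0 else 2) else (if snd u = snd v then 3 else 1))"

lemma gdist_C:
  assumes n: "3 \<le> n" and u: "u \<in> verts (C n)" and v: "v \<in> verts (C n)"
  shows "gdist (C n) u v = D u v"
proof -
  obtain a i where ui: "u = (a,i)" by fastforce
  obtain b j where vj: "v = (b,j)" by fastforce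
  have ai: "a < 2" "i < n" and bj: "b < 2" "j < n" using u v ui vj verts_C by auto
  show ?thesis
  proof (cases "a = b")
    case True
    show ?thesis
    proof (cases "i = j")
      case True
      show ?thesis using \<open>a=b\<close> True ui vj u
        by (intro gdist_eqI[where xs="[u]"]) (auto simp: D_def is_walk_def)
    next
      case False
      obtain k where k: "k < n" "k \<noteq> i" "k \<noteq> j" using avoid2[OF n] by blast
      show ?thesis
      proof (rule gdist_eqI[where xs="[u,(1-a,k),v]"])
        show "is_walk (C n) [u, (1 - a, k), v]" using ai bj k \<open>a=b\<close> False
          apply (simp add: walk_simp3 verts_C adj_C ui vj) by arith
      next
        fix m ys assume "m < D u v" "is_walk (C n) ys" "hd ys = u" "last ys = v" "length ys = Suc m"
        then have "m = 0 \<or> m = 1" using \<open>a=b\<close> False ui vj by (auto simp: D_def)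
        then show False using walk1[of "C n" ys] walk2[of "C n" ys] \<open>a=b\<close> False ui vj
          \<open>is_walk (C n) ys\<close> \<open>hd ys = u\<close> \<open>last ys = v\<close> \<open>length ys = Suc m\<close>
          by (auto simp: adj_C)
      qed (auto simp: D_def \<open>a=b\<close> False ui vj)
    qed
  next
    case False
    show ?thesis
    proof (cases "i = j")
      case True
      obtain j' where j': "j' < n" "j' \<noteq> i" using avoid2[OF n] by blast
      obtain k where k: "k < n" "k \<noteq> i" "k \<noteq> j'" using avoid2[OF n] by blast
      show ?thesis
      proof (rule gdist_eqI[where xs="[u,(b,j'),(a,k),v]"])
        show "is_walk (C n) [u, (b,j'), (a,k), v]" using ai bj k j' False True
          by (simp add: walk_simp4 verts_C adj_C ui vj)
      next
        fix m ys assume h: "m < D u v" "is_walk (C n) ys" "hd ys = u" "last ys = v" "length ys = Suc m"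
        have m3: "m < 3" using h(1) False True by (simp add: D_def ui vj)
        show False
        proof -
          have "m = 0 \<or> m = 1 \<or> m = 2" using m3 by linarith
          moreover have "m \<noteq> 0" using walk1[of "C n" ys] h False ui vj by auto
          moreover have "m \<noteq> 1" using walk2[of "C n" ys] h True ui vj by (auto simp: adj_C)
          moreover have "m \<noteq> 2"
          proof
            assume "m = 2"
            then obtain y where "y \<in> verts (C n)" "adj (C n) u y" "adj (C n) y v"
              using walk3[of "C n" ys] h by (auto simp: numeral_2_eq_2)
            then show False using ai bj False ui vj verts_C[of n]
              by (cases y) (auto simp: adj_C)
          qed
          ultimately show False by blast
        qed
      qed (auto simp: D_def False True ui vj)
    next
      case ij: False
      show ?thesis
      proof (rule gdist_eqI[where xs="[u,v]"])
        show "is_walk (C n) [u, v]" using ai bj False ij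
          by (simp add: walk_simp2 verts_C adj_C ui vj)
      next
        fix m ys assume "m < D u v" "is_walk (C n) ys" "hd ys = u" "last ys = v" "length ys = Suc m"
        then show False using walk1[of "C n" ys] False ij ui vj
          by (auto simp: D_def)
      qed (auto simp: D_def False ij ui vj)
    qed
  qed
qed

lemma parity_walk:
  assumes w: "is_walk (C 2) xs"
  shows "m < length xs \<Longrightarrow> (fst (xs!m) + snd (xs!m)) mod 2 = (fst (xs!0) + snd (xs!0)) mod 2"
proof (induction m)
  case 0 then show ?case by simp
next
  case (Suc m)
  have a: "adj (C 2) (xs!m) (xs!Suc m)" using w Suc.prems unfolding is_walk_def by blast
  have "xs!m \<in> verts (C 2)" "xs!Suc m \<in> verts (C 2)" using w Suc.prems unfolding is_walk_def
    by (auto dest: nth_mem)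
  moreover obtain p q r t where "xs!m = (p,q)" "xs!Suc m = (r,t)" by fastforce
  ultimately have "(r + t) mod 2 = (p + q) mod 2" using a apply (auto simp: verts_C adj_C)
    by presburger
  then show ?case using Suc \<open>xs!m = (p,q)\<close> \<open>xs!Suc m = (r,t)\<close> by simp
qed

lemma disconnected: "\<not> connected_graph (C 2)"
proof
  assume "connected_graph (C 2)"
  then obtain xs where w: "is_walk (C 2) xs" "hd xs = (0,0)" "last xs = (0,1)"
    unfolding connected_graph_def by (force simp: verts_C)
  have ne: "xs \<noteq> []" using w unfolding is_walk_def by auto
  have "(fst (xs!(length xs - 1)) + snd (xs!(length xs - 1))) mod 2 = (fst (xs!0) + snd (xs!0)) mod 2"
    using parity_walk[OF w(1), of "length xs - 1"] ne by simp
  moreover have "xs!0 = (0,0)" using w(2) ne by (simp add: hd_conv_nth)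
  moreover have "xs!(length xs - 1) = (0,1)" using w(3) ne by (simp add: last_conv_nth)
  ultimately show False by simp
qed

lemma resolving_W0:
  assumes n: "3 \<le> n"
  shows "resolving_set (C n) ({0} \<times> {..<n-1})"
  unfolding resolving_set_def
proof (intro conjI ballI impI)
  show "{0} \<times> {..<n - 1} \<subseteq> verts (C n)" by (auto simp: verts_C)
next
  fix u v assume u: "u \<in> verts (C n)" and v: "v \<in> verts (C n)"
    and eq: "\<forall>w\<in>{0} \<times> {..<n - 1}. gdist (C n) u w = gdist (C n) v w"
  have eqD: "D u w = D v w" if "w \<in> {0} \<times> {..<n - 1}" for w
  proof -
    have "w \<in> verts (C n)" using that by (auto simp: verts_C)
    moreover have "gdist (C n) u w = gdist (C n) v w" using eq that by blast
    ultimately show ?thesis using gdist_C[OF n u] gdist_C[OF n v] by metis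
  qed
  obtain a i where ui: "u = (a,i)" by fastforce
  obtain b j where vj: "v = (b,j)" by fastforce
  have ai: "a < 2" "i < n" and bj: "b < 2" "j < n" using u v ui vj verts_C by auto
  have "D u (0,0) = D v (0,0)" using eqD n by auto
  then have ab: "a = b" using ai bj unfolding ui vj D_def by (auto split: if_splits)
  have ij: "i = j"
  proof (rule ccontr)
    assume ne: "i \<noteq> j"
    show False
    proof (cases "i < n - 1")
      case True
      then have "D u (0,i) = D v (0,i)" using eqD by auto
      then show False using ne ab unfolding ui vj D_def by (auto split: if_splits)
    next
      case False
      then have "j < n - 1" using ne ai bj by linarith
      then have "D u (0,j) = D v (0,j)" using eqD by auto
      then show False using ne ab unfolding ui vj D_def by (auto split: if_splits)
    qed
  qed
  show "u = v" using ab ij ui vj by simp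
qed

lemma lower_bound:
  assumes n: "3 \<le> n" and f: "finite W" and r: "resolving_set (C n) W"
  shows "n - 1 \<le> card W"
proof (rule ccontr)
  assume "\<not> n - 1 \<le> card W"
  then have cW: "card W + 2 \<le> n" by linarith
  have Wv: "W \<subseteq> verts (C n)" using r unfolding resolving_set_def by blast
  let ?I = "snd ` W"
  have I: "?I \<subseteq> {..<n}" using Wv by (auto simp: verts_C)
  have cI: "card ?I \<le> card W" using f by (rule card_image_le)
  have "card ({..<n} - ?I) = n - card ?I" using I by (simp add: card_Diff_subset finite_subset)
  then have c2: "card ({..<n} - ?I) \<ge> 2" using cI cW by linarith
  then obtain j where j: "j \<in> {..<n} - ?I"
    by (metis all_not_in_conv card.empty not_numeral_le_zero)
  have "card ({..<n} - ?I - {j}) \<ge> 1" using c2 j by (simp add: card_Diff_singleton)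
  then obtain k where k: "k \<in> {..<n} - ?I - {j}"
    by (metis all_not_in_conv card.empty not_one_le_zero)
  have uv: "(0,j) \<in> verts (C n)" "(0,k) \<in> verts (C n)" using j k by (auto simp: verts_C)
  have "\<forall>w\<in>W. gdist (C n) (0,j) w = gdist (C n) (0,k) w"
  proof
    fix w assume w: "w \<in> W"
    then have wv: "w \<in> verts (C n)" using Wv by blast
    have "snd w \<noteq> j" "snd w \<noteq> k" using w j k by auto
    then have "D (0,j) w = D (0,k) w" unfolding D_def by auto
    then show "gdist (C n) (0,j) w = gdist (C n) (0,k) w"
      using gdist_C[OF n uv(1) wv] gdist_C[OF n uv(2) wv] by simp
  qed
  then have "(0,j) = ((0::nat),k)" using r uv unfolding resolving_set_def by blast
  then show False using k by auto
qed

theorem proposition3p2: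
  fixes n :: nat
  shows "(n = 2 \<longrightarrow> \<not> connected_graph (tensor_product (complete_graph 2) (complete_graph n)))
       \<and> (n \<ge> 3 \<longrightarrow> metric_dim (tensor_product (complete_graph 2) (complete_graph n)) = n - 1)"
proof (intro conjI impI)
  assume "n = 2" then show "\<not> connected_graph (C n)" using disconnected by simp
next
  assume n: "3 \<le> n"
  show "metric_dim (C n) = n - 1"
    unfolding metric_dim_def
  proof (rule Least_equality)
    show "\<exists>W. finite W \<and> card W = n - 1 \<and> resolving_set (C n) W"
      apply (rule exI[of _ "{0} \<times> {..<n-1}"]) using resolving_W0[OF n] by (simp add: card_cartesian_product)
  next
    fix y assume "\<exists>W. finite W \<and> card W = y \<and> resolving_set (C n) W"
    then show "n - 1 \<le> y" using lower_bound[OF n] by blast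
  qed
qed

end
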